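(* Let $V$ be a vertex operator algebra of CFT type and $M=\bigoplus_{n\ge0}M(n)$ an admissible $V$-module strongly generated by $w_1,\dots,w_r$ with $w_i\in M(n_i)$ for all $i$. Then for all $n\ge0$, $$A(M)_n=A(V)_{n-n_1}\ast w_1+\dots+A(V)_{n-n_r}\ast w_r\quad\text{and}\quad A(M)_n=w_1\ast A(V)_{n-n_1}+\dots+w_r\ast A(V)_{n-n_r},$$ where $w_i$ also denotes its image in $A(M)$.
   Context: $V_0=\mathbb{C}\mathbf{1}$, $V_+=\bigoplus_{n\ge1}V_n$, $Y_M(a,z)=\sum_na_nz^{-n-1}$. $M$ is strongly generated by a set $W$ if it is spanned by $a^1_{-n_1}\cdots a^k_{-n_k}w$ with $k\ge0$, $a^i\in V_+$ homogeneous, $n_i\ge1$, $w\in W$. Zhu's algebra $A(V)=V/O(V)$, $O(V)$ spanned by $\mathrm{Res}_zY(a,z)b\frac{(1+z)^{\mathrm{wt} a}}{z^2}$, product $a\ast b=\mathrm{Res}_zY(a,z)b\frac{(1+z)^{\mathrm{wt} a}}{z}$; $A(V)_n$ is the image of $\bigoplus_{i\le n}V_i$, and $A(V)_k=0$ for $k<0$. $A(M)=M/O(M)$, $O(M)$ spanned by $\mathrm{Res}_zY_M(a,z)v\frac{(1+z)^{\mathrm{wt} a}}{z^2}$, is an $A(V)$-bimodule with $a\ast v=\mathrm{Res}_zY_M(a,z)v\frac{(1+z)^{\mathrm{wt} a}}{z}$ and $v\ast a=\mathrm{Res}_zY_M(a,z)v\frac{(1+z)^{\mathrm{wt} a-1}}{z}$;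 $A(M)_n$ is the image of $\bigoplus_{i=0}^nM(i)$ in $A(M)$. *)

theory Defs
  imports Complex_Main
begin

text \<open>
  Vector spaces over the complex numbers are modelled as types of class
  ab_group_add together with a scalar multiplication (locale vector_space of
  HOL/Vector_Spaces).  Vertex operators are given by their modes:
  Y a n b = a_n b, i.e. Y(a,z) b = sum_n (a_n b) z^(-n-1).
\<close>

type_synonym ('v,'m) vop = "'v \<Rightarrow> int \<Rightarrow> 'm \<Rightarrow> 'm"

definition ibinom :: "int \<Rightarrow> nat \<Rightarrow> complex" where
  "ibinom m i = (of_int m) gchoose i"

text \<open>All three sums are finite; we sum over {..<N} for any N beyond which all
  terms vanish.\<close>
definition borcherds :: "('v::ab_group_add,'v) vop \<Rightarrow> (complex \<Rightarrow> 'm::ab_group_add \<Rightarrow> 'm) \<Rightarrow> ('v,'m) vop \<Rightarrow> bool" where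
  "borcherds Y sM YM \<longleftrightarrow>
    (\<forall>a b v m n k N.
       (\<forall>i\<ge>N. Y a (k + int i) b = 0 \<and> YM b (n + int i) v = 0 \<and> YM a (m + int i) v = 0) \<longrightarrow>
       (\<Sum>i<N. sM (ibinom m i) (YM (Y a (k + int i) b) (m + n - int i) v))
       = (\<Sum>i<N. sM ((-1)^i * ibinom k i)
             (YM a (m + k - int i) (YM b (n + int i) v)
              - sM ((-1) ^ nat \<bar>k\<bar>) (YM b (n + k - int i) (YM a (m + int i) v)))))"

definition weak_module ::
  "(complex \<Rightarrow> 'v::ab_group_add \<Rightarrow> 'v) \<Rightarrow> ('v,'v) vop \<Rightarrow> 'v \<Rightarrow>
   (complex \<Rightarrow> 'm::ab_group_add \<Rightarrow> 'm) \<Rightarrow> ('v,'m) vop \<Rightarrow> bool" where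
  "weak_module sV Y vac sM YM \<longleftrightarrow>
     vector_space sM \<and>
     (\<forall>a n. Vector_Spaces.linear sM sM (YM a n)) \<and>
     (\<forall>n v. Vector_Spaces.linear sV sM (\<lambda>a. YM a n v)) \<and>
     (\<forall>a v. \<exists>N. \<forall>n\<ge>N. YM a n v = 0) \<and>
     (\<forall>n v. YM vac n v = (if n = -1 then v else 0)) \<and>
     borcherds Y sM YM"

definition Lop :: "('v,'m) vop \<Rightarrow> 'v \<Rightarrow> int \<Rightarrow> 'm \<Rightarrow> 'm" where
  "Lop YM \<omega> n = YM \<omega> (n + 1)"

definition Vdeg :: "(complex \<Rightarrow> 'v \<Rightarrow> 'v) \<Rightarrow> ('v,'v) vop \<Rightarrow> 'v \<Rightarrow> int \<Rightarrow> 'v set" where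
  "Vdeg sV Y \<omega> n = {v. Lop Y \<omega> 0 v = sV (of_int n) v}"

definition is_VOA ::
  "(complex \<Rightarrow> 'v::ab_group_add \<Rightarrow> 'v) \<Rightarrow> ('v,'v) vop \<Rightarrow> 'v \<Rightarrow> 'v \<Rightarrow> complex \<Rightarrow> bool" where
  "is_VOA sV Y vac \<omega> c \<longleftrightarrow>
     vector_space sV \<and>
     weak_module sV Y vac sV Y \<and>
     (\<forall>a. Y a (-1) vac = a \<and> (\<forall>n\<ge>0. Y a n vac = 0)) \<and>
     \<comment> \<open>grading by L(0): V = direct sum of the V_n (eigenspaces are automatically independent)\<close>
     (\<forall>v. v \<in> module.span sV (\<Union>n. Vdeg sV Y \<omega> n)) \<and>
     (\<forall>n. \<exists>B. finite B \<and> Vdeg sV Y \<omega> n \<subseteq> module.span sV B) \<and>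
     (\<exists>N. \<forall>n<N. Vdeg sV Y \<omega> n = {0}) \<and>
     \<omega> \<in> Vdeg sV Y \<omega> 2 \<and>
     \<comment> \<open>Virasoro relations\<close>
     (\<forall>m n v. Lop Y \<omega> m (Lop Y \<omega> n v) - Lop Y \<omega> n (Lop Y \<omega> m v)
        = sV (of_int (m - n)) (Lop Y \<omega> (m + n) v)
          + (if m + n = 0 then sV ((of_int (m^3 - m) / 12) * c) v else 0)) \<and>
     \<comment> \<open>L(-1)-derivative property\<close>
     (\<forall>a n. Y (Lop Y \<omega> (-1) a) n = (\<lambda>b. sV (- of_int n) (Y a (n - 1) b)))"

definition is_VOA_CFT_type ::
  "(complex \<Rightarrow> 'v::ab_group_add \<Rightarrow> 'v) \<Rightarrow> ('v,'v) vop \<Rightarrow> 'v \<Rightarrow> 'v \<Rightarrow> complex \<Rightarrow> bool" where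
  "is_VOA_CFT_type sV Y vac \<omega> c \<longleftrightarrow>
     is_VOA sV Y vac \<omega> c \<and>
     (\<forall>n<0. Vdeg sV Y \<omega> n = {0}) \<and>
     Vdeg sV Y \<omega> 0 = {sV z vac | z. True}"

definition admissible ::
  "(complex \<Rightarrow> 'v::ab_group_add \<Rightarrow> 'v) \<Rightarrow> ('v,'v) vop \<Rightarrow> 'v \<Rightarrow> 'v \<Rightarrow>
   (complex \<Rightarrow> 'm::ab_group_add \<Rightarrow> 'm) \<Rightarrow> ('v,'m) vop \<Rightarrow> (nat \<Rightarrow> 'm set) \<Rightarrow> bool" where
  "admissible sV Y vac \<omega> sM YM Mg \<longleftrightarrow>
     weak_module sV Y vac sM YM \<and>
     (\<forall>n. module.subspace sM (Mg n)) \<and>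
     (\<forall>v. v \<in> module.span sM (\<Union>n. Mg n)) \<and>
     (\<forall>F f. finite F \<and> (\<forall>n\<in>F. f n \<in> Mg n) \<and> (\<Sum>n\<in>F. f n) = 0 \<longrightarrow> (\<forall>n\<in>F. f n = 0)) \<and>
     (\<forall>a k m n v. a \<in> Vdeg sV Y \<omega> k \<and> v \<in> Mg n \<longrightarrow>
        (if k - m - 1 + int n \<ge> 0 then YM a m v \<in> Mg (nat (k - m - 1 + int n))
         else YM a m v = 0))"

inductive_set strong_words ::
  "(complex \<Rightarrow> 'v \<Rightarrow> 'v) \<Rightarrow> ('v,'v) vop \<Rightarrow> 'v \<Rightarrow> ('v,'m) vop \<Rightarrow> 'm set \<Rightarrow> 'm set"
  for sV Y \<omega> YM W where
  base: "w \<in> W \<Longrightarrow> w \<in> strong_words sV Y \<omega> YM W"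
| step: "a \<in> Vdeg sV Y \<omega> k \<Longrightarrow> k \<ge> 1 \<Longrightarrow> n \<ge> 1 \<Longrightarrow> x \<in> strong_words sV Y \<omega> YM W \<Longrightarrow>
         YM a (- n) x \<in> strong_words sV Y \<omega> YM W"

definition strongly_generated where
  "strongly_generated sV Y \<omega> sM YM W \<longleftrightarrow>
     (\<forall>v. v \<in> module.span sM (strong_words sV Y \<omega> YM W))"

text \<open>For homogeneous a of weight k and v in M:
  a * v = Res_z Y_M(a,z) v (1+z)^k / z = sum_i binom(k,i) a_{i-1} v,
  v * a = Res_z Y_M(a,z) v (1+z)^(k-1) / z = sum_i binom(k-1,i) a_{i-1} v,
  and the generator of O(M): Res_z Y_M(a,z) v (1+z)^k / z^2 = sum_i binom(k,i) a_{i-2} v.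
  (For v * a the sum is over i \<le> k: for k \<ge> 1 the further binomials vanish, and
  for k = 0 in a VOA of CFT type a is a multiple of the vacuum, whose modes
  a_{i-1}, i \<ge> 1, vanish.)\<close>
definition star_left :: "(complex \<Rightarrow> 'm::ab_group_add \<Rightarrow> 'm) \<Rightarrow> ('v,'m) vop \<Rightarrow> 'v \<Rightarrow> nat \<Rightarrow> 'm \<Rightarrow> 'm" where
  "star_left sM YM a k v = (\<Sum>i\<le>k. sM (ibinom (int k) i) (YM a (int i - 1) v))"

definition star_right :: "(complex \<Rightarrow> 'm::ab_group_add \<Rightarrow> 'm) \<Rightarrow> ('v,'m) vop \<Rightarrow> 'm \<Rightarrow> 'v \<Rightarrow> nat \<Rightarrow> 'm" where
  "star_right sM YM v a k = (\<Sum>i\<le>k. sM (ibinom (int k - 1) i) (YM a (int i - 1) v))"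

definition circ_elt :: "(complex \<Rightarrow> 'm::ab_group_add \<Rightarrow> 'm) \<Rightarrow> ('v,'m) vop \<Rightarrow> 'v \<Rightarrow> nat \<Rightarrow> 'm \<Rightarrow> 'm" where
  "circ_elt sM YM a k v = (\<Sum>i\<le>k. sM (ibinom (int k) i) (YM a (int i - 2) v))"

definition OM where
  "OM sV Y \<omega> sM YM = module.span sM {circ_elt sM YM a k v | a k v. a \<in> Vdeg sV Y \<omega> (int k)}"

text \<open>Preimage in M of A(M)_n: the span of (+)_{i \<le> n} M(i) together with O(M).\<close>
definition AM_filt where
  "AM_filt sV Y \<omega> sM YM Mg n = module.span sM ((\<Union>i\<le>n. Mg i) \<union> OM sV Y \<omega> sM YM)"

text \<open>Preimage in M of  A(V)_{n-n_1} * w_1 + ... + A(V)_{n-n_r} * w_r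
  (A(V)_j is the image of (+)_{i \<le> j} V_i; by linearity of * in a it suffices
  to take homogeneous a).\<close>
definition left_gen_span where
  "left_gen_span sV Y \<omega> sM YM r w nn n =
     module.span sM ((\<Union>i<r. {star_left sM YM a k (w i) | a k.
         a \<in> Vdeg sV Y \<omega> (int k) \<and> int k \<le> int n - int (nn i)}) \<union> OM sV Y \<omega> sM YM)"

definition right_gen_span where
  "right_gen_span sV Y \<omega> sM YM r w nn n =
     module.span sM ((\<Union>i<r. {star_right sM YM (w i) a k | a k.
         a \<in> Vdeg sV Y \<omega> (int k) \<and> int k \<le> int n - int (nn i)}) \<union> OM sV Y \<omega> sM YM)"

end

theory Submission
  imports Defs "HOL-Computational_Algebra.Polynomial"
begin

locale zhu =
  fixes sV :: "complex \<Rightarrow> 'v::ab_group_add \<Rightarrow> 'v" and Y :: "('v,'v) vop"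
    and vac \<omega> :: 'v and c :: complex
    and sM :: "complex \<Rightarrow> 'm::ab_group_add \<Rightarrow> 'm" and YM :: "('v,'m) vop"
    and Mg :: "nat \<Rightarrow> 'm set"
  assumes VOA: "is_VOA_CFT_type sV Y vac \<omega> c"
    and ADM: "admissible sV Y vac \<omega> sM YM Mg"
begin

lemma wmM: "weak_module sV Y vac sM YM" using ADM unfolding admissible_def by blast
lemma isVOA: "is_VOA sV Y vac \<omega> c" using VOA unfolding is_VOA_CFT_type_def by blast
lemma wmV: "weak_module sV Y vac sV Y" using isVOA unfolding is_VOA_def by blast

sublocale M: vector_space sM using wmM unfolding weak_module_def by blast
sublocale V: vector_space sV using isVOA unfolding is_VOA_def by blast

lemma linM: "Vector_Spaces.linear sM sM (YM a n)" using wmM unfolding weak_module_def by blast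
lemma linMa: "Vector_Spaces.linear sV sM (\<lambda>a. YM a n v)" using wmM unfolding weak_module_def by blast
lemma linV: "Vector_Spaces.linear sV sV (Y a n)" using wmV unfolding weak_module_def by blast
lemma linVa: "Vector_Spaces.linear sV sV (\<lambda>a. Y a n v)" using wmV unfolding weak_module_def by blast

lemma YM_add: "YM a n (x + y) = YM a n x + YM a n y"
  using linM[of a n] by (simp add: Vector_Spaces.linear_iff)
lemma YM_scale: "YM a n (sM z x) = sM z (YM a n x)"
  using linM[of a n] by (simp add: Vector_Spaces.linear_iff)
lemma YM_diff: "YM a n (x - y) = YM a n x - YM a n y"
proof -
  interpret additive "YM a n" by standard (rule YM_add)
  show ?thesis by (rule diff)
qed
lemma YM_zero: "YM a n 0 = 0"
proof -
  interpret additive "YM a n" by standard (rule YM_add)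
  show ?thesis by (rule zero)
qed
lemma YM_sum: "YM a n (\<Sum>i\<in>A. f i) = (\<Sum>i\<in>A. YM a n (f i))"
proof -
  interpret additive "YM a n" by standard (rule YM_add)
  show ?thesis by (rule sum)
qed
lemma YMa_add: "YM (a + b) n v = YM a n v + YM b n v"
  using linMa[of n v] by (simp add: Vector_Spaces.linear_iff)
lemma YMa_scale: "YM (sV z a) n v = sM z (YM a n v)"
  using linMa[of n v] by (simp add: Vector_Spaces.linear_iff)
lemma YV_add: "Y a n (x + y) = Y a n x + Y a n y"
  using linV[of a n] by (simp add: Vector_Spaces.linear_iff)
lemma YV_scale: "Y a n (sV z x) = sV z (Y a n x)"
  using linV[of a n] by (simp add: Vector_Spaces.linear_iff)
lemma YVa_add: "Y (a + b) n v = Y a n v + Y b n v"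
  using linVa[of n v] by (simp add: Vector_Spaces.linear_iff)
lemma YVa_scale: "Y (sV z a) n v = sV z (Y a n v)"
  using linVa[of n v] by (simp add: Vector_Spaces.linear_iff)
lemma YV_diff: "Y a n (x - y) = Y a n x - Y a n y"
proof -
  interpret additive "Y a n" by standard (rule YV_add)
  show ?thesis by (rule diff)
qed

lemma truncM: "\<exists>N. \<forall>n\<ge>N. YM a n v = 0" using wmM unfolding weak_module_def by blast
lemma truncV: "\<exists>N. \<forall>n\<ge>N. Y a n v = 0" using wmV unfolding weak_module_def by blast
lemma vacM: "YM vac n v = (if n = -1 then v else 0)" using wmM unfolding weak_module_def by blast
lemma borM: "borcherds Y sM YM" using wmM unfolding weak_module_def by blast
lemma borV: "borcherds Y sV Y" using wmV unfolding weak_module_def by blast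
lemma creation: "Y a (-1) vac = a" "n \<ge> 0 \<Longrightarrow> Y a n vac = 0" using isVOA unfolding is_VOA_def by blast+
lemma neg_deg: "n < 0 \<Longrightarrow> Vdeg sV Y \<omega> n = {0}" using VOA unfolding is_VOA_CFT_type_def by blast
lemma deg0: "Vdeg sV Y \<omega> 0 = {sV z vac | z. True}" using VOA unfolding is_VOA_CFT_type_def by blast
lemma omega2: "\<omega> \<in> Vdeg sV Y \<omega> 2" using isVOA unfolding is_VOA_def by blast
lemma Lm1: "Y (Lop Y \<omega> (-1) a) n = (\<lambda>b. sV (- of_int n) (Y a (n - 1) b))"
  using isVOA unfolding is_VOA_def by blast
lemma Mg_sub: "M.subspace (Mg n)" using ADM[unfolded admissible_def, THEN conjunct2, THEN conjunct1] by blast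
lemma Mg_indep: "finite F \<Longrightarrow> (\<forall>n\<in>F. f n \<in> Mg n) \<Longrightarrow> (\<Sum>n\<in>F. f n) = 0 \<Longrightarrow> n \<in> F \<Longrightarrow> f n = 0"
  using ADM[unfolded admissible_def, THEN conjunct2, THEN conjunct2, THEN conjunct2, THEN conjunct1] by blast
lemma Mg_grad: "a \<in> Vdeg sV Y \<omega> k \<Longrightarrow> v \<in> Mg n \<Longrightarrow>
        (if k - m - 1 + int n \<ge> 0 then YM a m v \<in> Mg (nat (k - m - 1 + int n))
         else YM a m v = 0)"
  using ADM[unfolded admissible_def, THEN conjunct2, THEN conjunct2, THEN conjunct2, THEN conjunct2] by blast

end


declare sum.lessThan_Suc[simp del] sum.atMost_Suc[simp del]

lemma sum_single: "finite A \<Longrightarrow> j \<in> A \<Longrightarrow> (\<And>i. i \<in> A \<Longrightarrow> i \<noteq> j \<Longrightarrow> f i = 0) \<Longrightarrow> sum f A = f j"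
  by (simp add: sum.remove)

lemma ibinom_nat: "ibinom (int k) i = of_nat (k choose i)"
  by (simp add: ibinom_def binomial_gbinomial)

lemma ibinom_m1: "ibinom (-1) i = (-1)^i"
proof -
  have "ibinom (-1) i = (-1)^i * ((of_nat i) gchoose i)"
    unfolding ibinom_def by (subst gbinomial_negated_upper) simp
  also have "\<dots> = (-1)^i" by (simp add: binomial_gbinomial[symmetric])
  finally show ?thesis .
qed

lemma ibinom_m2: "ibinom (-2) i = (-1)^i * of_nat (i + 1)"
proof -
  have "ibinom (-2) i = (-1)^i * ((of_nat i + 1) gchoose i)"
    unfolding ibinom_def by (subst gbinomial_negated_upper) (simp add: algebra_simps)
  also have "(of_nat i + 1 :: complex) gchoose i = of_nat (Suc i choose i)"
    using binomial_gbinomial[of "Suc i" i, where 'a=complex] by (simp add: add.commute)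
  also have "Suc i choose i = Suc i" by (rule binomial_Suc_n)
  finally show ?thesis by simp
qed

abbreviation RR :: "complex poly" where "RR \<equiv> [:1, 1:]"

lemma coeff_RR: "coeff (RR ^ k) i = of_nat (k choose i)"
proof (cases "i \<le> k")
  case True then show ?thesis by (simp add: coeff_linear_poly_power)
next
  case False then show ?thesis by (simp add: coeff_eq_0 degree_linear_power)
qed

lemma degree_RR: "degree (RR ^ k) = k" by (rule degree_linear_power)

context zhu
begin

definition res :: "'v \<Rightarrow> int \<Rightarrow> complex poly \<Rightarrow> 'm \<Rightarrow> 'm" where
  "res a N p v = (\<Sum>i\<le>degree p. sM (coeff p i) (YM a (int i - N) v))"

lemma res_bound: "degree p < D \<Longrightarrow> res a N p v = (\<Sum>i<D. sM (coeff p i) (YM a (int i - N) v))"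
  unfolding res_def
  by (rule sum.mono_neutral_right[symmetric]) (auto simp: coeff_eq_0)

lemma res_add: "res a N (p + q) v = res a N p v + res a N q v"
proof -
  define D where "D = Suc (max (degree p) (degree q))"
  have "degree (p + q) < D" using degree_add_le_max[of p q] unfolding D_def by linarith
  moreover have "degree p < D" "degree q < D" unfolding D_def by auto
  ultimately show ?thesis
    by (simp add: res_bound[of _ D] M.scale_left_distrib sum.distrib)
qed

lemma res_smult: "res a N (smult z p) v = sM z (res a N p v)"
proof -
  have "degree (smult z p) < Suc (degree p)" using degree_smult_le[of z p] by linarith
  then show ?thesis
    by (simp add: res_bound[of _ "Suc (degree p)"] M.scale_sum_right)
qed

lemma res_zero: "res a N 0 v = 0" by (simp add: res_def)

lemma res_sum: "res a N (\<Sum>j\<in>A. p j) v = (\<Sum>j\<in>A. res a N (p j) v)"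
  by (induction A rule: infinite_finite_induct) (simp_all add: res_zero res_add)

lemma res_diff: "res a N (p - q) v = res a N p v - res a N q v"
  using res_add[of a N "p - q" q v] by (simp add: algebra_simps)

lemma res_monom: "res a N (monom z n) v = sM z (YM a (int n - N) v)"
proof -
  have "degree (monom z n) < Suc n" by (simp add: degree_monom_le le_imp_less_Suc)
  then have "res a N (monom z n) v = (\<Sum>i<Suc n. sM (coeff (monom z n) i) (YM a (int i - N) v))"
    by (rule res_bound)
  also have "\<dots> = sM z (YM a (int n - N) v)"
    by (subst sum_single[where j=n]) auto
  finally show ?thesis .
qed

lemma res_pCons0: "res a N (pCons 0 p) v = res a (N - 1) p v"
proof -
  have "degree (pCons 0 p) < Suc (Suc (degree p))" by (simp add: degree_pCons_le le_imp_less_Suc)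
  then have "res a N (pCons 0 p) v = (\<Sum>i<Suc (Suc (degree p)). sM (coeff (pCons 0 p) i) (YM a (int i - N) v))"
    by (rule res_bound)
  also have "\<dots> = (\<Sum>i<Suc (degree p). sM (coeff p i) (YM a (int (Suc i) - N) v))"
    by (subst sum.lessThan_Suc_shift) simp
  also have "\<dots> = res a (N - 1) p v"
    by (subst res_bound[of p "Suc (degree p)"]) (auto intro!: sum.cong simp: algebra_simps)
  finally show ?thesis .
qed

lemma res_v_add: "res a N p (x + y) = res a N p x + res a N p y"
  by (simp add: res_def YM_add M.scale_right_distrib sum.distrib)
lemma res_v_scale: "res a N p (sM z x) = sM z (res a N p x)"
  by (simp add: res_def YM_scale M.scale_sum_right mult.commute)
lemma res_v_diff: "res a N p (x - y) = res a N p x - res a N p y"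
  by (simp add: res_def YM_diff M.scale_right_diff_distrib sum_subtractf)
lemma res_v_zero: "res a N p 0 = 0"
  by (simp add: res_def YM_zero)
lemma res_v_sum: "res a N p (\<Sum>j\<in>A. f j) = (\<Sum>j\<in>A. res a N p (f j))"
  by (induction A rule: infinite_finite_induct) (simp_all add: res_v_add res_v_zero)

lemma res_RR: "res a N (RR ^ k) v = (\<Sum>i\<le>k. sM (of_nat (k choose i)) (YM a (int i - N) v))"
  by (simp add: res_def degree_RR coeff_RR)

lemma star_left_res: "star_left sM YM a k v = res a 1 (RR ^ k) v"
  by (simp add: star_left_def res_RR ibinom_nat)

lemma circ_res: "circ_elt sM YM a k v = res a 2 (RR ^ k) v"
  by (simp add: circ_elt_def res_RR ibinom_nat)

end


lemma trunc_shift: "\<exists>K::int. \<forall>n\<ge>K. f n = 0 \<Longrightarrow> \<exists>N::nat. \<forall>i\<ge>N. f (c + int i) = 0"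
proof -
  assume "\<exists>K::int. \<forall>n\<ge>K. f n = 0"
  then obtain K where K: "\<forall>n\<ge>K. f n = 0" by blast
  show ?thesis by (rule exI[of _ "nat (K - c)"]) (use K in auto)
qed

lemma sum_two: "2 \<le> N \<Longrightarrow> (\<And>i. i \<ge> 2 \<Longrightarrow> f i = 0) \<Longrightarrow> (\<Sum>i<N. f i) = f 0 + f (1::nat)"
proof -
  assume N: "2 \<le> N" and z: "\<And>i. i \<ge> 2 \<Longrightarrow> f i = 0"
  have "(\<Sum>i<N. f i) = (\<Sum>i\<in>{0,1}. f i)"
    by (rule sum.mono_neutral_right) (use N z in auto)
  then show ?thesis by simp
qed

context zhu
begin

lemma borM_inst:
  assumes "\<And>i. i \<ge> N \<Longrightarrow> Y a (k + int i) b = 0" "\<And>i. i \<ge> N \<Longrightarrow> YM b (n + int i) v = 0"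
    "\<And>i. i \<ge> N \<Longrightarrow> YM a (m + int i) v = 0"
  shows "(\<Sum>i<N. sM (ibinom m i) (YM (Y a (k + int i) b) (m + n - int i) v))
       = (\<Sum>i<N. sM ((-1)^i * ibinom k i)
             (YM a (m + k - int i) (YM b (n + int i) v)
              - sM ((-1) ^ nat \<bar>k\<bar>) (YM b (n + k - int i) (YM a (m + int i) v))))"
proof -
  have "\<forall>i\<ge>N. Y a (k + int i) b = 0 \<and> YM b (n + int i) v = 0 \<and> YM a (m + int i) v = 0"
    using assms by blast
  then show ?thesis using borM[unfolded borcherds_def, rule_format, of N a k b n v m] by blast
qed

lemma borV_inst:
  assumes "\<And>i. i \<ge> N \<Longrightarrow> Y a (k + int i) b = 0" "\<And>i. i \<ge> N \<Longrightarrow> Y b (n + int i) v = 0"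
    "\<And>i. i \<ge> N \<Longrightarrow> Y a (m + int i) v = 0"
  shows "(\<Sum>i<N. sV (ibinom m i) (Y (Y a (k + int i) b) (m + n - int i) v))
       = (\<Sum>i<N. sV ((-1)^i * ibinom k i)
             (Y a (m + k - int i) (Y b (n + int i) v)
              - sV ((-1) ^ nat \<bar>k\<bar>) (Y b (n + k - int i) (Y a (m + int i) v))))"
proof -
  have "\<forall>i\<ge>N. Y a (k + int i) b = 0 \<and> Y b (n + int i) v = 0 \<and> Y a (m + int i) v = 0"
    using assms by blast
  then show ?thesis using borV[unfolded borcherds_def, rule_format, of N a k b n v m] by blast
qed

lemma ibinom0: "ibinom 0 i = (if i = 0 then 1 else 0)"
  by (simp add: ibinom_def gbinomial_0_left)

lemma ibinom1: "ibinom 1 i = of_nat (1 choose i)"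
  using ibinom_nat[of 1 i] by simp

lemma Lm1_eq: "Y \<omega> 0 a = Y a (-2) vac"
proof -
  have "Y (Lop Y \<omega> (-1) a) (-1) vac = sV (- of_int (-1)) (Y a (-1 - 1) vac)"
    by (simp add: Lm1)
  then show ?thesis by (simp add: creation Lop_def)
qed

lemma LM1_M: "YM (Y \<omega> 0 a) n v = sM (- of_int n) (YM a (n - 1) v)"
proof -
  obtain N3 where N3: "\<forall>i\<ge>N3. YM a (0 + int i) v = 0" using trunc_shift[OF truncM] by blast
  define N where "N = 2 + nat \<bar>n\<bar> + N3"
  have h1: "Y a (-2 + int i) vac = 0" if "i \<ge> N" for i using that creation(2) unfolding N_def by auto
  have h2: "YM vac (n + int i) v = 0" if "i \<ge> N" for i using that vacM unfolding N_def by auto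
  have h3: "YM a (0 + int i) v = 0" if "i \<ge> N" for i using that N3 unfolding N_def by auto
  note B = borM_inst[where N=N, OF h1 h2 h3]
  have lhs: "(\<Sum>i<N. sM (ibinom 0 i) (YM (Y a (-2 + int i) vac) (0 + n - int i) v)) = YM (Y a (-2) vac) n v"
    by (subst sum_single[where j=0]) (auto simp: ibinom0 N_def)
  have coef: "(-1)^i * ibinom (-2) i = (of_nat (i + 1) :: complex)" for i
  proof -
    have "((-1::complex)^i * (-1)^i) = 1" by (simp add: power_mult_distrib[symmetric])
    then show ?thesis by (simp add: ibinom_m2 mult.assoc[symmetric])
  qed
  define A where "A = (\<Sum>i<N. sM (of_nat (i + 1)) (if n + int i = -1 then YM a (-2 - int i) v else 0))"
  define Bm where "Bm = (\<Sum>i<N. sM (of_nat (i + 1)) (if n - 2 - int i = -1 then YM a (int i) v else 0))"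
  have rhs: "(\<Sum>i<N. sM ((-1)^i * ibinom (-2) i)
             (YM a (0 + -2 - int i) (YM vac (n + int i) v)
              - sM ((-1) ^ nat \<bar>-2::int\<bar>) (YM vac (n + -2 - int i) (YM a (0 + int i) v)))) = A - Bm"
    unfolding A_def Bm_def coef sum_subtractf[symmetric]
    by (rule sum.cong) (auto simp: vacM YM_zero M.scale_right_diff_distrib)
  have A: "A = (if n < 0 then sM (- of_int n) (YM a (n - 1) v) else 0)"
  proof (cases "n < 0")
    case True
    have "A = sM (of_nat (nat (-1 - n) + 1)) (if n + int (nat (-1 - n)) = -1 then YM a (-2 - int (nat (-1 - n))) v else 0)"
      unfolding A_def by (rule sum_single) (use True in \<open>auto simp: N_def\<close>)
    also have "\<dots> = sM (- of_int n) (YM a (n - 1) v)"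
    proof -
      obtain j where j: "n = -1 - int j" using True by (intro that[of "nat (-1 - n)"]) simp
      have "of_nat (nat (-1 - n) + 1) = (- of_int n :: complex)"
        unfolding j by simp
      moreover have "-2 - int (nat (-1 - n)) = n - 1" using True by simp
      ultimately show ?thesis using True by simp
    qed
    finally show ?thesis using True by simp
  next
    case False
    then show ?thesis unfolding A_def by (auto intro!: sum.neutral)
  qed
  have Bm: "Bm = (if n > 0 then sM (of_int n) (YM a (n - 1) v) else 0)"
  proof (cases "n > 0")
    case True
    have "Bm = sM (of_nat (nat (n - 1) + 1)) (if n - 2 - int (nat (n - 1)) = -1 then YM a (int (nat (n - 1))) v else 0)"
      unfolding Bm_def by (rule sum_single) (use True in \<open>auto simp: N_def\<close>)
    also have "\<dots> = sM (of_int n) (YM a (n - 1) v)"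
    proof -
      obtain j where j: "n = 1 + int j" using True by (intro that[of "nat (n - 1)"]) simp
      have "of_nat (nat (n - 1) + 1) = (of_int n :: complex)"
        unfolding j by simp
      then show ?thesis using True by simp
    qed
    finally show ?thesis using True by simp
  next
    case False
    then show ?thesis unfolding Bm_def by (auto intro!: sum.neutral)
  qed
  have "YM (Y a (-2) vac) n v = A - Bm" using B unfolding lhs rhs .
  also have "\<dots> = sM (- of_int n) (YM a (n - 1) v)"
    unfolding A Bm by (cases "n < 0"; cases "n > 0") simp_all
  finally show ?thesis by (simp add: Lm1_eq)
qed

lemma Vdeg_iff: "x \<in> Vdeg sV Y \<omega> k \<longleftrightarrow> Y \<omega> 1 x = sV (of_int k) x"
  by (simp add: Vdeg_def Lop_def)

lemma V_grad:
  assumes a: "a \<in> Vdeg sV Y \<omega> k" and b: "b \<in> Vdeg sV Y \<omega> l"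
  shows "Y a n b \<in> Vdeg sV Y \<omega> (k + l - n - 1)"
proof -
  obtain N1 where N1: "\<forall>i\<ge>N1. Y \<omega> (0 + int i) a = 0" using trunc_shift[OF truncV] by blast
  obtain N2 where N2: "\<forall>i\<ge>N2. Y a (n + int i) b = 0" using trunc_shift[OF truncV] by blast
  obtain N3 where N3: "\<forall>i\<ge>N3. Y \<omega> (1 + int i) b = 0" using trunc_shift[OF truncV] by blast
  define N where "N = 2 + N1 + N2 + N3"
  have h1: "Y \<omega> (0 + int i) a = 0" if "i \<ge> N" for i using that N1 unfolding N_def by auto
  have h2: "Y a (n + int i) b = 0" if "i \<ge> N" for i using that N2 unfolding N_def by auto
  have h3: "Y \<omega> (1 + int i) b = 0" if "i \<ge> N" for i using that N3 unfolding N_def by auto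
  note B = borV_inst[where N=N, OF h1 h2 h3]
  have lhs: "(\<Sum>i<N. sV (ibinom 1 i) (Y (Y \<omega> (0 + int i) a) (1 + n - int i) b))
     = Y (Y \<omega> 0 a) (1 + n) b + Y (Y \<omega> 1 a) n b"
    by (subst sum_two) (auto simp: N_def ibinom1)
  have rhs: "(\<Sum>i<N. sV ((-1)^i * ibinom 0 i)
             (Y \<omega> (1 + 0 - int i) (Y a (n + int i) b)
              - sV ((-1) ^ nat \<bar>0::int\<bar>) (Y a (n + 0 - int i) (Y \<omega> (1 + int i) b))))
     = Y \<omega> 1 (Y a n b) - Y a n (Y \<omega> 1 b)"
    by (subst sum_single[where j=0]) (auto simp: N_def ibinom0)
  have e1: "Y (Y \<omega> 0 a) (1 + n) b = sV (- of_int (1 + n)) (Y a n b)"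
    using Lm1[of a "1 + n"] by (simp add: Lop_def)
  have e2: "Y (Y \<omega> 1 a) n b = sV (of_int k) (Y a n b)"
    using a by (simp add: Vdeg_iff YVa_scale)
  have e3: "Y a n (Y \<omega> 1 b) = sV (of_int l) (Y a n b)"
    using b by (simp add: Vdeg_iff YV_scale)
  have main: "Y (Y \<omega> 0 a) (1 + n) b + Y (Y \<omega> 1 a) n b = Y \<omega> 1 (Y a n b) - Y a n (Y \<omega> 1 b)"
    using B unfolding lhs rhs .
  have "Y \<omega> 1 (Y a n b) = Y (Y \<omega> 0 a) (1 + n) b + Y (Y \<omega> 1 a) n b + Y a n (Y \<omega> 1 b)"
    using main by (simp add: eq_diff_eq)
  also have "\<dots> = sV (- of_int (1 + n)) (Y a n b) + sV (of_int k) (Y a n b) + sV (of_int l) (Y a n b)"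
    unfolding e1 e2 e3 ..
  also have "\<dots> = sV (- of_int (1 + n) + of_int k + of_int l) (Y a n b)"
    by (simp add: V.scale_left_distrib)
  also have "\<dots> = sV (of_int (k + l - n - 1)) (Y a n b)"
    by (simp add: algebra_simps)
  finally show ?thesis by (simp add: Vdeg_iff)
qed

end


context zhu
begin

abbreviation OMM where "OMM \<equiv> OM sV Y \<omega> sM YM"

lemma OO_sub: "M.subspace OMM" unfolding OM_def by (rule M.subspace_span)

lemma circ_in_OO: "a \<in> Vdeg sV Y \<omega> (int k) \<Longrightarrow> circ_elt sM YM a k v \<in> OMM"
  unfolding OM_def by (rule M.span_base) blast

lemma L1_deg: "a \<in> Vdeg sV Y \<omega> (int k) \<Longrightarrow> Y \<omega> 0 a \<in> Vdeg sV Y \<omega> (int (Suc k))"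
  using V_grad[OF omega2, of a "int k" 0] by simp

lemma coeff_L1poly: "coeff (smult (of_int N) p - pCons 0 (pderiv p)) i = (of_int N - of_nat i) * coeff p i"
  by (cases i) (simp_all add: coeff_pderiv algebra_simps)

lemma res_L1: "res (Y \<omega> 0 a) N p v = res a (N + 1) (smult (of_int N) p - pCons 0 (pderiv p)) v"
proof -
  let ?q = "smult (of_int N) p - pCons 0 (pderiv p)"
  have dq: "degree ?q < Suc (degree p)"
  proof -
    have "\<forall>i>degree p. coeff ?q i = 0" by (simp only: coeff_L1poly) (auto simp: coeff_eq_0)
    then have "degree ?q \<le> degree p" by (rule degree_le)
    then show ?thesis by simp
  qed
  have "res (Y \<omega> 0 a) N p v = (\<Sum>i<Suc (degree p). sM (coeff p i) (YM (Y \<omega> 0 a) (int i - N) v))"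
    by (rule res_bound) simp
  also have "\<dots> = (\<Sum>i<Suc (degree p). sM (coeff ?q i) (YM a (int i - (N + 1)) v))"
    apply (rule sum.cong, rule refl)
    apply (subst coeff_L1poly)
    apply (simp add: LM1_M algebra_simps)
    done
  also have "\<dots> = res a (N + 1) ?q v" by (rule res_bound[symmetric]) (rule dq)
  finally show ?thesis .
qed

lemma RR_L1_ident:
  "smult (of_int (int M + 2)) (RR ^ Suc k) - pCons 0 (pderiv (RR ^ Suc k))
   = smult (of_nat M + 2) (RR ^ k) + pCons 0 (smult (of_nat M + 1 - of_nat k) (RR ^ k))"
proof -
  have d: "pderiv (RR ^ Suc k) = smult (of_nat (Suc k)) (RR ^ k)"
    by (subst pderiv_power_Suc) (simp add: pderiv_pCons)
  show ?thesis
    unfolding d by (rule poly_ext) (simp add: algebra_simps)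
qed

lemma lemA_nat: "a \<in> Vdeg sV Y \<omega> (int k) \<Longrightarrow> res a (int M + 2) (RR ^ k) v \<in> OMM"
proof (induction M arbitrary: a k v)
  case 0
  then show ?case using circ_in_OO[OF 0] by (simp add: circ_res)
next
  case (Suc M)
  have a1: "Y \<omega> 0 a \<in> Vdeg sV Y \<omega> (int (Suc k))" by (rule L1_deg[OF Suc.prems])
  have I1: "res (Y \<omega> 0 a) (int M + 2) (RR ^ Suc k) v \<in> OMM" by (rule Suc.IH[OF a1])
  have I2: "res a (int M + 2) (RR ^ k) v \<in> OMM" by (rule Suc.IH[OF Suc.prems])
  have "res (Y \<omega> 0 a) (int M + 2) (RR ^ Suc k) v
      = sM (of_nat M + 2) (res a (int M + 3) (RR ^ k) v)
        + sM (of_nat M + 1 - of_nat k) (res a (int M + 2) (RR ^ k) v)"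
    unfolding res_L1 RR_L1_ident by (simp add: res_add res_pCons0 res_smult) (simp add: add.commute)
  then have "sM (of_nat M + 2) (res a (int M + 3) (RR ^ k) v)
      = res (Y \<omega> 0 a) (int M + 2) (RR ^ Suc k) v - sM (of_nat M + 1 - of_nat k) (res a (int M + 2) (RR ^ k) v)"
    by (simp add: eq_diff_eq)
  also have "\<dots> \<in> OMM" using I1 I2 OO_sub by (simp add: M.subspace_diff M.subspace_scale)
  finally have "sM (inverse (of_nat M + 2)) (sM (of_nat M + 2) (res a (int M + 3) (RR ^ k) v)) \<in> OMM"
    by (rule M.subspace_scale[OF OO_sub])
  moreover have "(inverse (of_nat M + 2) * (of_nat M + 2 :: complex)) = 1"
  proof -
    have "(of_nat M + 2 :: complex) = of_nat (M + 2)" by simp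
    moreover have "(of_nat (M + 2) :: complex) \<noteq> 0" by (simp only: of_nat_eq_0_iff)
    ultimately have "(of_nat M + 2 :: complex) \<noteq> 0" by (simp add: add.commute)
    then show ?thesis by (rule left_inverse)
  qed
  ultimately show ?case by (simp add: add.commute)
qed

lemma lemA: "a \<in> Vdeg sV Y \<omega> (int k) \<Longrightarrow> N \<ge> 2 \<Longrightarrow> res a N (RR ^ k) v \<in> OMM"
  using lemA_nat[of a k "nat (N - 2)" v] by simp

end


lemma binom_deriv_sum:
  fixes x :: complex
  assumes "t \<le> k"
  shows "(\<Sum>m\<le>k. of_nat (k choose m) * of_nat (m choose t) * x ^ (m - t)) = of_nat (k choose t) * (1 + x) ^ (k - t)"
proof -
  have "(\<Sum>m\<le>k. of_nat (k choose m) * of_nat (m choose t) * x ^ (m - t))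
      = (\<Sum>m\<in>{t..k}. of_nat (k choose m) * of_nat (m choose t) * x ^ (m - t))"
    by (rule sum.mono_neutral_right) auto
  also have "\<dots> = (\<Sum>j\<le>k - t. of_nat (k choose (j + t)) * of_nat ((j + t) choose t) * x ^ j)"
    by (rule sum.reindex_bij_witness[where j="\<lambda>m. m - t" and i="\<lambda>j. j + t"]) (use assms in auto)
  also have "\<dots> = (\<Sum>j\<le>k - t. of_nat (k choose t) * (of_nat ((k - t) choose j) * x ^ j))"
  proof (rule sum.cong[OF refl])
    fix j assume "j \<in> {..k - t}"
    then have "(k choose (j + t)) * ((j + t) choose t) = (k choose t) * ((k - t) choose j)"
      using choose_mult[of t "j + t" k] assms by simp
    then have "(of_nat (k choose (j + t)) * of_nat ((j + t) choose t) :: complex) = of_nat (k choose t) * of_nat ((k - t) choose j)"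
      by (metis of_nat_mult)
    then show "of_nat (k choose (j + t)) * of_nat ((j + t) choose t) * x ^ j = of_nat (k choose t) * (of_nat ((k - t) choose j) * x ^ j)"
      by (simp add: mult.assoc)
  qed
  also have "\<dots> = of_nat (k choose t) * (\<Sum>j\<le>k - t. of_nat ((k - t) choose j) * x ^ j)"
    by (simp add: sum_distrib_left)
  also have "(\<Sum>j\<le>k - t. of_nat ((k - t) choose j) * x ^ j) = (x + 1) ^ (k - t)"
    by (simp add: binomial_ring[of x 1])
  finally show ?thesis by (simp add: add.commute)
qed

lemma binom_sum_x: "(\<Sum>q\<le>l. of_nat (l choose q) * (x::complex) ^ q) = (1 + x) ^ l"
proof -
  have "(x + 1) ^ l = (\<Sum>q\<le>l. of_nat (l choose q) * x ^ q * 1 ^ (l - q))" by (rule binomial_ring)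
  then show ?thesis by (simp add: add.commute)
qed

lemma poly_RR: "poly (RR ^ n) x = (1 + x) ^ n" by simp

lemma poly_id:
  "(\<Sum>m\<le>k. \<Sum>q\<le>l. smult (of_nat (k choose m) * of_nat (l choose q) * of_nat (m choose t)) (monom 1 (m + q - t)))
   = smult (of_nat (k choose t)) (RR ^ (k + l - t))"
proof (rule poly_ext)
  fix x :: complex
  show "poly (\<Sum>m\<le>k. \<Sum>q\<le>l. smult (of_nat (k choose m) * of_nat (l choose q) * of_nat (m choose t)) (monom 1 (m + q - t))) x
      = poly (smult (of_nat (k choose t)) (RR ^ (k + l - t))) x"
  proof (cases "t \<le> k")
    case True
    have "poly (\<Sum>m\<le>k. \<Sum>q\<le>l. smult (of_nat (k choose m) * of_nat (l choose q) * of_nat (m choose t)) (monom 1 (m + q - t))) x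
        = (\<Sum>m\<le>k. \<Sum>q\<le>l. (of_nat (k choose m) * of_nat (m choose t) * x ^ (m - t)) * (of_nat (l choose q) * x ^ q))"
      unfolding poly_sum poly_smult poly_monom
    proof (intro sum.cong refl)
      fix m q
      show "of_nat (k choose m) * of_nat (l choose q) * of_nat (m choose t) * (1 * x ^ (m + q - t))
          = of_nat (k choose m) * of_nat (m choose t) * x ^ (m - t) * (of_nat (l choose q) * x ^ q)"
      proof (cases "t \<le> m")
        case True
        then have "x ^ (m + q - t) = x ^ (m - t) * x ^ q" by (simp add: power_add[symmetric])
        then show ?thesis by (simp add: algebra_simps)
      next
        case False then show ?thesis by simp
      qed
    qed
    also have "\<dots> = (\<Sum>m\<le>k. of_nat (k choose m) * of_nat (m choose t) * x ^ (m - t)) * (\<Sum>q\<le>l. of_nat (l choose q) * x ^ q)"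
      by (simp add: sum_product)
    also have "\<dots> = of_nat (k choose t) * (1 + x) ^ (k - t) * (1 + x) ^ l"
      by (simp add: binom_deriv_sum[OF True] binom_sum_x)
    also have "\<dots> = poly (smult (of_nat (k choose t)) (RR ^ (k + l - t))) x"
      using True by (simp add: power_add[symmetric] mult.assoc)
    finally show ?thesis .
  next
    case False
    then have z: "\<And>m. m \<le> k \<Longrightarrow> (m choose t) = 0" by auto
    show ?thesis using False by (simp add: poly_sum z)
  qed
qed



context zhu
begin

lemma res_term:
  "res e P (smult (z * of_nat (m choose t)) (monom 1 (m + q - t))) v
   = sM (z * of_nat (m choose t)) (YM e (int m + (int q - P) - int t) v)"
proof (cases "t \<le> m")
  case True
  then have "int (m + q - t) - P = int m + (int q - P) - int t" by simp
  then show ?thesis unfolding res_smult res_monom by (simp only:) simp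
next
  case False
  then show ?thesis by (simp add: res_smult res_zero)
qed

lemma sum3_swap: "(\<Sum>m\<in>A. \<Sum>q\<in>B. \<Sum>t\<in>C. f m q t) = (\<Sum>t\<in>C. \<Sum>m\<in>A. \<Sum>q\<in>B. f m q t)"
proof -
  have "(\<Sum>m\<in>A. \<Sum>q\<in>B. \<Sum>t\<in>C. f m q t) = (\<Sum>m\<in>A. \<Sum>t\<in>C. \<Sum>q\<in>B. f m q t)"
    by (intro sum.cong refl) (rule sum.swap)
  also have "\<dots> = (\<Sum>t\<in>C. \<Sum>m\<in>A. \<Sum>q\<in>B. f m q t)" by (rule sum.swap)
  finally show ?thesis .
qed

lemma G:
  fixes k l :: nat and P :: int
  shows "\<exists>N>0. (\<Sum>t<N. sM (of_nat (k choose t)) (res (Y a (-1 + int t) b) P (RR ^ (k + l - t)) v))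
           = (\<Sum>i<N. res a (1 + int i) (RR ^ k) (res b (P - int i) (RR ^ l) v)
                   + res b (P + 1 + int i) (RR ^ l) (res a (- int i) (RR ^ k) v))"
proof -
  obtain Na where Na: "\<forall>i\<ge>Na. Y a (-1 + int i) b = 0" using trunc_shift[OF truncV] by blast
  obtain Kb where Kb: "\<forall>n\<ge>Kb. YM b n v = 0" using truncM by blast
  obtain Kc where Kc: "\<forall>n\<ge>Kc. YM a n v = 0" using truncM by blast
  define N where "N = Suc (Na + nat (Kb + P) + nat Kc)"
  have h1: "Y a (-1 + int i) b = 0" if "i \<ge> N" for i using that Na unfolding N_def by auto
  have h2: "YM b ((int q - P) + int i) v = 0" if "i \<ge> N" for i q using that Kb unfolding N_def by auto
  have h3: "YM a (int m + int i) v = 0" if "i \<ge> N" for i m using that Kc unfolding N_def by auto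
  have c1: "(-1::complex)^i * ibinom (-1) i = 1" for i
    by (simp add: ibinom_m1 power_mult_distrib[symmetric])
  have E: "(\<Sum>i<N. sM (ibinom (int m) i) (YM (Y a (-1 + int i) b) (int m + (int q - P) - int i) v))
      = (\<Sum>i<N. YM a (int m - 1 - int i) (YM b (int q - P + int i) v) + YM b (int q - P - 1 - int i) (YM a (int m + int i) v))" for m q
  proof -
    note B = borM_inst[where N=N and k="-1" and n="int q - P" and m="int m" and a=a and b=b and v=v,
        OF h1 h2[of _ q] h3[of _ m]]
    have R: "(\<Sum>i<N. sM ((-1)^i * ibinom (-1) i)
             (YM a (int m + -1 - int i) (YM b (int q - P + int i) v)
              - sM ((-1) ^ nat \<bar>-1::int\<bar>) (YM b (int q - P + -1 - int i) (YM a (int m + int i) v))))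
        = (\<Sum>i<N. YM a (int m - 1 - int i) (YM b (int q - P + int i) v) + YM b (int q - P - 1 - int i) (YM a (int m + int i) v))"
      by (rule sum.cong[OF refl]) (simp add: c1)
    show ?thesis using B R by (rule trans)
  qed
  let ?c = "\<lambda>m q. (of_nat (k choose m) * of_nat (l choose q) :: complex)"
  have tot: "(\<Sum>m\<le>k. \<Sum>q\<le>l. sM (?c m q) (\<Sum>i<N. sM (ibinom (int m) i) (YM (Y a (-1 + int i) b) (int m + (int q - P) - int i) v)))
      = (\<Sum>m\<le>k. \<Sum>q\<le>l. sM (?c m q) (\<Sum>i<N. YM a (int m - 1 - int i) (YM b (int q - P + int i) v) + YM b (int q - P - 1 - int i) (YM a (int m + int i) v)))"
    by (simp only: E)
  have L: "(\<Sum>m\<le>k. \<Sum>q\<le>l. sM (?c m q) (\<Sum>i<N. sM (ibinom (int m) i) (YM (Y a (-1 + int i) b) (int m + (int q - P) - int i) v)))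
      = (\<Sum>t<N. sM (of_nat (k choose t)) (res (Y a (-1 + int t) b) P (RR ^ (k + l - t)) v))"
  proof -
    have "(\<Sum>m\<le>k. \<Sum>q\<le>l. sM (?c m q) (\<Sum>i<N. sM (ibinom (int m) i) (YM (Y a (-1 + int i) b) (int m + (int q - P) - int i) v)))
       = (\<Sum>m\<le>k. \<Sum>q\<le>l. \<Sum>t<N. sM (?c m q * of_nat (m choose t)) (YM (Y a (-1 + int t) b) (int m + (int q - P) - int t) v))"
      by (simp add: M.scale_sum_right ibinom_nat)
    also have "\<dots> = (\<Sum>t<N. \<Sum>m\<le>k. \<Sum>q\<le>l. sM (?c m q * of_nat (m choose t)) (YM (Y a (-1 + int t) b) (int m + (int q - P) - int t) v))"
      by (rule sum3_swap)
    also have "\<dots> = (\<Sum>t<N. res (Y a (-1 + int t) b) P (\<Sum>m\<le>k. \<Sum>q\<le>l. smult (?c m q * of_nat (m choose t)) (monom 1 (m + q - t))) v)"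
      by (simp add: res_sum res_term)
    also have "\<dots> = (\<Sum>t<N. sM (of_nat (k choose t)) (res (Y a (-1 + int t) b) P (RR ^ (k + l - t)) v))"
      by (simp add: poly_id res_smult)
    finally show ?thesis .
  qed
  have RA: "res a (1 + int i) (RR ^ k) (res b (P - int i) (RR ^ l) v)
      = (\<Sum>m\<le>k. \<Sum>q\<le>l. sM (?c m q) (YM a (int m - 1 - int i) (YM b (int q - P + int i) v)))" for i
    unfolding res_RR YM_sum YM_scale M.scale_sum_right M.scale_scale
    by (intro sum.cong refl) (simp add: algebra_simps)
  have RB: "res b (P + 1 + int i) (RR ^ l) (res a (- int i) (RR ^ k) v)
      = (\<Sum>m\<le>k. \<Sum>q\<le>l. sM (?c m q) (YM b (int q - P - 1 - int i) (YM a (int m + int i) v)))" for i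
    unfolding res_RR YM_sum YM_scale M.scale_sum_right M.scale_scale
    by (subst sum.swap) (intro sum.cong refl, simp add: algebra_simps)
  have R: "(\<Sum>m\<le>k. \<Sum>q\<le>l. sM (?c m q) (\<Sum>i<N. YM a (int m - 1 - int i) (YM b (int q - P + int i) v) + YM b (int q - P - 1 - int i) (YM a (int m + int i) v)))
      = (\<Sum>i<N. res a (1 + int i) (RR ^ k) (res b (P - int i) (RR ^ l) v)
                   + res b (P + 1 + int i) (RR ^ l) (res a (- int i) (RR ^ k) v))"
  proof -
    have "(\<Sum>m\<le>k. \<Sum>q\<le>l. sM (?c m q) (\<Sum>i<N. YM a (int m - 1 - int i) (YM b (int q - P + int i) v) + YM b (int q - P - 1 - int i) (YM a (int m + int i) v)))
      = (\<Sum>m\<le>k. \<Sum>q\<le>l. \<Sum>i<N. sM (?c m q) (YM a (int m - 1 - int i) (YM b (int q - P + int i) v)) + sM (?c m q) (YM b (int q - P - 1 - int i) (YM a (int m + int i) v)))"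
      by (simp add: M.scale_sum_right M.scale_right_distrib)
    also have "\<dots> = (\<Sum>i<N. \<Sum>m\<le>k. \<Sum>q\<le>l. sM (?c m q) (YM a (int m - 1 - int i) (YM b (int q - P + int i) v)) + sM (?c m q) (YM b (int q - P - 1 - int i) (YM a (int m + int i) v)))"
      by (rule sum3_swap)
    also have "\<dots> = (\<Sum>i<N. res a (1 + int i) (RR ^ k) (res b (P - int i) (RR ^ l) v)
                   + res b (P + 1 + int i) (RR ^ l) (res a (- int i) (RR ^ k) v))"
      unfolding RA RB by (simp add: sum.distrib)
    finally show ?thesis .
  qed
  show ?thesis using L tot R by (intro exI[of _ N]) (simp add: N_def)
qed

end


context zhu
begin

lemma extract0:
  fixes N :: nat
  assumes "N > 0" "X = (\<Sum>i<N. A i + B i)" "X \<in> S" "\<And>i. i \<ge> 1 \<Longrightarrow> A i \<in> S" "\<And>i. B i \<in> S"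
    "M.subspace S"
  shows "A 0 \<in> S"
proof -
  obtain N' where N: "N = Suc N'" using assms(1) by (cases N) auto
  have "X = (A 0 + B 0) + (\<Sum>i<N'. A (Suc i) + B (Suc i))"
    using assms(2) unfolding N by (simp add: sum.lessThan_Suc_shift)
  then have "A 0 = X - B 0 - (\<Sum>i<N'. A (Suc i) + B (Suc i))" by (simp add: algebra_simps)
  also have "\<dots> \<in> S"
    using assms(3-6) by (intro M.subspace_diff M.subspace_sum M.subspace_add) auto
  finally show ?thesis .
qed

lemma Vdeg_prod: "a \<in> Vdeg sV Y \<omega> (int k) \<Longrightarrow> b \<in> Vdeg sV Y \<omega> (int l) \<Longrightarrow> t \<le> k + l \<Longrightarrow>
   Y a (-1 + int t) b \<in> Vdeg sV Y \<omega> (int (k + l - t))"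
proof -
  assume a: "a \<in> Vdeg sV Y \<omega> (int k)" and b: "b \<in> Vdeg sV Y \<omega> (int l)" and t: "t \<le> k + l"
  have e: "int k + int l - (-1 + int t) - 1 = int (k + l - t)" using t by simp
  show ?thesis by (subst e[symmetric]) (rule V_grad[OF a b])
qed

lemma star_left_sub: "M.subspace {y. star_left sM YM a k y \<in> S}" if "M.subspace S"
  using that unfolding star_left_res M.subspace_def by (simp add: res_v_add res_v_scale res_v_zero)

lemma OMM_left_circ:
  assumes a: "a \<in> Vdeg sV Y \<omega> (int k)" and b: "b \<in> Vdeg sV Y \<omega> (int l)"
  shows "star_left sM YM a k (circ_elt sM YM b l u) \<in> OMM"
proof -
  obtain N where N: "N > 0" and E: "(\<Sum>t<N. sM (of_nat (k choose t)) (res (Y a (-1 + int t) b) 2 (RR ^ (k + l - t)) u))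
           = (\<Sum>i<N. res a (1 + int i) (RR ^ k) (res b (2 - int i) (RR ^ l) u)
                   + res b (2 + 1 + int i) (RR ^ l) (res a (- int i) (RR ^ k) u))"
    using G[of k a b 2 l u] by blast
  have X: "(\<Sum>t<N. sM (of_nat (k choose t)) (res (Y a (-1 + int t) b) 2 (RR ^ (k + l - t)) u)) \<in> OMM"
  proof (intro M.subspace_sum[OF OO_sub])
    fix t assume "t \<in> {..<N}"
    show "sM (of_nat (k choose t)) (res (Y a (-1 + int t) b) 2 (RR ^ (k + l - t)) u) \<in> OMM"
    proof (cases "t \<le> k")
      case True
      then have "Y a (-1 + int t) b \<in> Vdeg sV Y \<omega> (int (k + l - t))" by (intro Vdeg_prod a b) simp
      then show ?thesis unfolding circ_res[symmetric]
        by (intro M.subspace_scale[OF OO_sub] circ_in_OO)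
    next
      case False then have z: "k choose t = 0" by (simp add: binomial_eq_0)
      show ?thesis using OO_sub by (simp add: z M.subspace_0)
    qed
  qed
  have "(\<lambda>i. res a (1 + int i) (RR ^ k) (res b (2 - int i) (RR ^ l) u)) 0 \<in> OMM"
  proof (rule extract0[where A="\<lambda>i. res a (1 + int i) (RR ^ k) (res b (2 - int i) (RR ^ l) u)"
        and B="\<lambda>i. res b (2 + 1 + int i) (RR ^ l) (res a (- int i) (RR ^ k) u)", OF N E X _ _ OO_sub])
    fix i :: nat assume "i \<ge> 1"
    then show "res a (1 + int i) (RR ^ k) (res b (2 - int i) (RR ^ l) u) \<in> OMM" by (intro lemA a) simp
  next
    fix i :: nat
    show "res b (2 + 1 + int i) (RR ^ l) (res a (- int i) (RR ^ k) u) \<in> OMM" by (intro lemA b) simp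
  qed
  then show ?thesis by (simp add: star_left_res circ_res)
qed

lemma OMM_left:
  assumes a: "a \<in> Vdeg sV Y \<omega> (int k)" and o: "x \<in> OMM"
  shows "star_left sM YM a k x \<in> OMM"
proof -
  have "x \<in> {y. star_left sM YM a k y \<in> OMM}"
    using o unfolding OM_def
  proof (induction rule: M.span_induct)
    case (step x)
    then obtain b l u where "x = circ_elt sM YM b l u" "b \<in> Vdeg sV Y \<omega> (int l)" by blast
    then show ?case using OMM_left_circ[OF a] by (simp add: OM_def)
  qed (use star_left_sub[OF OO_sub] in \<open>simp add: OM_def\<close>)
  then show ?thesis by simp
qed

lemma assoc_left:
  assumes a: "a \<in> Vdeg sV Y \<omega> (int k)" and b: "b \<in> Vdeg sV Y \<omega> (int l)"
    and S: "M.subspace S" "OMM \<subseteq> S"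
    "\<And>t. t \<le> k \<Longrightarrow> star_left sM YM (Y a (-1 + int t) b) (k + l - t) x \<in> S"
  shows "star_left sM YM a k (star_left sM YM b l x) \<in> S"
proof -
  obtain N where N: "N > 0" and E: "(\<Sum>t<N. sM (of_nat (k choose t)) (res (Y a (-1 + int t) b) 1 (RR ^ (k + l - t)) x))
           = (\<Sum>i<N. res a (1 + int i) (RR ^ k) (res b (1 - int i) (RR ^ l) x)
                   + res b (1 + 1 + int i) (RR ^ l) (res a (- int i) (RR ^ k) x))"
    using G[of k a b 1 l x] by blast
  have X: "(\<Sum>t<N. sM (of_nat (k choose t)) (res (Y a (-1 + int t) b) 1 (RR ^ (k + l - t)) x)) \<in> S"
  proof (intro M.subspace_sum[OF S(1)])
    fix t assume "t \<in> {..<N}"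
    show "sM (of_nat (k choose t)) (res (Y a (-1 + int t) b) 1 (RR ^ (k + l - t)) x) \<in> S"
    proof (cases "t \<le> k")
      case True
      then show ?thesis using S(3)[OF True] unfolding star_left_res
        by (intro M.subspace_scale[OF S(1)])
    next
      case False then have z: "k choose t = 0" by (simp add: binomial_eq_0)
      show ?thesis using S(1) by (simp add: z M.subspace_0)
    qed
  qed
  have "(\<lambda>i. res a (1 + int i) (RR ^ k) (res b (1 - int i) (RR ^ l) x)) 0 \<in> S"
  proof (rule extract0[where A="\<lambda>i. res a (1 + int i) (RR ^ k) (res b (1 - int i) (RR ^ l) x)"
        and B="\<lambda>i. res b (1 + 1 + int i) (RR ^ l) (res a (- int i) (RR ^ k) x)", OF N E X _ _ S(1)])
    fix i :: nat assume "i \<ge> 1"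
    then show "res a (1 + int i) (RR ^ k) (res b (1 - int i) (RR ^ l) x) \<in> S" using S(2) by (intro subsetD[OF _ lemA[OF a]]) auto
  next
    fix i :: nat
    show "res b (1 + 1 + int i) (RR ^ l) (res a (- int i) (RR ^ k) x) \<in> S"
      using S(2) by (intro subsetD[OF _ lemA[OF b]]) auto
  qed
  then show ?thesis by (simp add: star_left_res)
qed

end


context zhu
begin

lemma Mg_unique: "x \<in> Mg d \<Longrightarrow> x \<in> Mg e \<Longrightarrow> d \<noteq> e \<Longrightarrow> x = 0"
proof -
  assume d: "x \<in> Mg d" and e: "x \<in> Mg e" and de: "d \<noteq> e"
  let ?f = "\<lambda>n. if n = d then x else - x"
  have "?f d = 0"
  proof (rule Mg_indep[of "{d, e}" ?f])
    show "\<forall>n\<in>{d, e}. ?f n \<in> Mg n" using d e de M.subspace_neg[OF Mg_sub] by auto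
    show "(\<Sum>n\<in>{d, e}. ?f n) = 0" using de by simp
  qed auto
  then show ?thesis by simp
qed

lemma mode_low:
  assumes a: "a \<in> Vdeg sV Y \<omega> (int k)" and y: "y \<in> Mg e" and lt: "int k - m - 1 + int e < int d"
    and S: "\<And>e'. e' < d \<Longrightarrow> Mg e' \<subseteq> S" "M.subspace S"
  shows "YM a m y \<in> S"
proof (cases "int k - m - 1 + int e \<ge> 0")
  case True
  then have "YM a m y \<in> Mg (nat (int k - m - 1 + int e))" using Mg_grad[OF a y, of m] by simp
  moreover have "nat (int k - m - 1 + int e) < d" using lt True by linarith
  ultimately show ?thesis using S(1) by blast
next
  case False
  then have "YM a m y = 0" using Mg_grad[OF a y, of m] by simp
  then show ?thesis using M.subspace_0[OF S(2)] by simp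
qed

lemma span_graded:
  assumes v: "v \<in> M.span W" and W: "\<forall>x\<in>W. \<exists>e. x \<in> Mg e" and vd: "v \<in> Mg d"
  shows "v \<in> M.span (W \<inter> Mg d)"
proof -
  obtain t r where t: "finite t" "t \<subseteq> W" and vt: "v = (\<Sum>a\<in>t. sM (r a) a)"
    using v unfolding M.span_explicit by blast
  define deg where "deg x = (SOME e. x \<in> Mg e)" for x
  have deg: "x \<in> Mg (deg x)" if "x \<in> W" for x
    unfolding deg_def using W that by (metis someI_ex)
  define F where "F = insert d (deg ` t)"
  define f where "f e = (\<Sum>a\<in>{a\<in>t. deg a = e}. sM (r a) a) - (if e = d then v else 0)" for e
  have fin: "finite F" using t unfolding F_def by simp
  have fM: "\<forall>e\<in>F. f e \<in> Mg e"
  proof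
    fix e assume "e \<in> F"
    have "(\<Sum>a\<in>{a\<in>t. deg a = e}. sM (r a) a) \<in> Mg e"
      using deg t by (intro M.subspace_sum[OF Mg_sub] M.subspace_scale[OF Mg_sub]) auto
    then show "f e \<in> Mg e" unfolding f_def using vd
      by (auto intro: M.subspace_diff[OF Mg_sub] simp: M.subspace_0[OF Mg_sub])
  qed
  have "(\<Sum>e\<in>F. f e) = (\<Sum>e\<in>F. \<Sum>a\<in>{a\<in>t. deg a = e}. sM (r a) a) - (\<Sum>e\<in>F. (if e = d then v else 0))"
    unfolding f_def by (simp add: sum_subtractf)
  also have "(\<Sum>e\<in>F. \<Sum>a\<in>{a\<in>t. deg a = e}. sM (r a) a) = (\<Sum>a\<in>t. sM (r a) a)"
    by (rule sum.group) (use t fin in \<open>auto simp: F_def\<close>)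
  also have "(\<Sum>e\<in>F. (if e = d then v else 0)) = v"
    using fin by (simp add: F_def)
  finally have "(\<Sum>e\<in>F. f e) = 0" using vt by simp
  then have "f d = 0" using Mg_indep[OF fin fM] by (simp add: F_def)
  then have "v = (\<Sum>a\<in>{a\<in>t. deg a = d}. sM (r a) a)" unfolding f_def by simp
  also have "\<dots> \<in> M.span (W \<inter> Mg d)"
    using deg t by (intro M.span_sum M.span_scale M.span_base) auto
  finally show ?thesis .
qed

lemma word_graded:
  assumes "x \<in> strong_words sV Y \<omega> YM W" "\<forall>x\<in>W. \<exists>e. x \<in> Mg e"
  shows "\<exists>e. x \<in> Mg e"
  using assms(1)
proof (induction rule: strong_words.induct)
  case (base w)
  then show ?case using assms(2) by blast
next
  case (step a k n x)
  then obtain e where e: "x \<in> Mg e" by blast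
  have "k - (- n) - 1 + int e \<ge> 0" using step by simp
  then show ?case using Mg_grad[OF step(1) e, of "- n"] by meson
qed

lemma vac0: "vac \<in> Vdeg sV Y \<omega> (int 0)"
  using deg0 by (simp) (metis V.scale_one)

lemma star_left_vac: "star_left sM YM vac 0 v = v"
  by (simp add: star_left_def ibinom_def vacM)

lemma ibinom_0: "ibinom m 0 = 1" by (simp add: ibinom_def)

end



locale zhu_gen = zhu +
  fixes r :: nat and w and nn :: "nat \<Rightarrow> nat"
  assumes SG: "strongly_generated sV Y \<omega> sM YM (w ` {..<r})"
    and WG: "\<forall>i<r. w i \<in> Mg (nn i)"
begin

abbreviation "Lgen n \<equiv> (\<Union>i<r. {star_left sM YM a k (w i) | a k.
         a \<in> Vdeg sV Y \<omega> (int k) \<and> int k \<le> int n - int (nn i)})"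
abbreviation "Rgen n \<equiv> (\<Union>i<r. {star_right sM YM (w i) a k | a k.
         a \<in> Vdeg sV Y \<omega> (int k) \<and> int k \<le> int n - int (nn i)})"
abbreviation "Lsp n \<equiv> left_gen_span sV Y \<omega> sM YM r w nn n"
abbreviation "Rsp n \<equiv> right_gen_span sV Y \<omega> sM YM r w nn n"
abbreviation "AF n \<equiv> AM_filt sV Y \<omega> sM YM Mg n"

lemma Lsp_eq: "Lsp n = M.span (Lgen n \<union> OMM)" by (simp add: left_gen_span_def)
lemma Rsp_eq: "Rsp n = M.span (Rgen n \<union> OMM)" by (simp add: right_gen_span_def)
lemma AF_eq: "AF n = M.span ((\<Union>i\<le>n. Mg i) \<union> OMM)" by (simp add: AM_filt_def)

lemma Lsp_sub: "M.subspace (Lsp n)" unfolding Lsp_eq by simp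
lemma Rsp_sub: "M.subspace (Rsp n)" unfolding Rsp_eq by simp
lemma AF_sub: "M.subspace (AF n)" unfolding AF_eq by simp

lemma OMM_Lsp: "OMM \<subseteq> Lsp n" unfolding Lsp_eq by (meson M.span_superset le_sup_iff)
lemma OMM_Rsp: "OMM \<subseteq> Rsp n" unfolding Rsp_eq by (meson M.span_superset le_sup_iff)
lemma OMM_AF: "OMM \<subseteq> AF n" unfolding AF_eq by (meson M.span_superset le_sup_iff)

lemma Lsp_mono: "e \<le> d \<Longrightarrow> Lsp e \<subseteq> Lsp d"
  unfolding Lsp_eq by (rule M.span_mono) fastforce
lemma Rsp_mono: "e \<le> d \<Longrightarrow> Rsp e \<subseteq> Rsp d"
  unfolding Rsp_eq by (rule M.span_mono) fastforce

lemma Lgen_Lsp: "x \<in> Lgen n \<Longrightarrow> x \<in> Lsp n" unfolding Lsp_eq by (simp add: M.span_base)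
lemma Rgen_Rsp: "x \<in> Rgen n \<Longrightarrow> x \<in> Rsp n" unfolding Rsp_eq by (simp add: M.span_base)

lemma M2:
  assumes y: "y \<in> Lsp e" and a: "a \<in> Vdeg sV Y \<omega> (int k)"
  shows "star_left sM YM a k y \<in> Lsp (e + k)"
proof -
  have "y \<in> {y. star_left sM YM a k y \<in> Lsp (e + k)}"
    using y unfolding Lsp_eq[of e]
  proof (induction rule: M.span_induct)
    case (step x)
    then show ?case
    proof
      assume "x \<in> Lgen e"
      then obtain i b l where i: "i < r" and x: "x = star_left sM YM b l (w i)"
        and b: "b \<in> Vdeg sV Y \<omega> (int l)" and l: "int l \<le> int e - int (nn i)" by blast
      have "star_left sM YM a k (star_left sM YM b l (w i)) \<in> Lsp (e + k)"
      proof (rule assoc_left[OF a b Lsp_sub OMM_Lsp])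
        fix t assume t: "t \<le> k"
        have "Y a (-1 + int t) b \<in> Vdeg sV Y \<omega> (int (k + l - t))" using t by (intro Vdeg_prod a b) simp
        moreover have "int (k + l - t) \<le> int (e + k) - int (nn i)" using t l by simp
        ultimately show "star_left sM YM (Y a (-1 + int t) b) (k + l - t) (w i) \<in> Lsp (e + k)"
          using i by (intro Lgen_Lsp) blast
      qed
      then show ?thesis using x by simp
    next
      assume "x \<in> OMM"
      then show ?thesis using OMM_left[OF a] OMM_Lsp by blast
    qed
  qed (use star_left_sub[OF Lsp_sub] in simp)
  then show ?thesis by simp
qed

lemma W_graded: "\<forall>x\<in>w ` {..<r}. \<exists>e. x \<in> Mg e" using WG by blast

lemma main_left: "Mg d \<subseteq> Lsp d"
proof (induction d rule: less_induct)
  case (less d)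
  have low: "Mg e \<subseteq> Lsp d" if "e < d" for e using less[OF that] Lsp_mono[of e d] that by auto
  have words: "x \<in> Lsp d" if x: "x \<in> strong_words sV Y \<omega> YM (w ` {..<r})" and xd: "x \<in> Mg d" for x
    using x
  proof (cases rule: strong_words.cases)
    case (base)
    then obtain i where i: "i < r" and xi: "x = w i" by blast
    show ?thesis
    proof (cases "d = nn i")
      case True
      have "star_left sM YM vac 0 (w i) \<in> Lgen d" using i vac0 True by fastforce
      then show ?thesis using xi star_left_vac Lgen_Lsp by simp
    next
      case False
      then have "x = 0" using Mg_unique[OF xd] WG i xi by blast
      then show ?thesis using M.subspace_0[OF Lsp_sub] by simp
    qed
  next
    case (step a k n y)
    obtain e' where e': "y \<in> Mg e'" using word_graded[OF step(5) W_graded] by blast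
    have kn: "k - (- n) - 1 + int e' \<ge> 0" using step by simp
    have xD: "x \<in> Mg (nat (k - (- n) - 1 + int e'))" using Mg_grad[OF step(2) e', of "- n"] kn step(1) by simp
    show ?thesis
    proof (cases "d = nat (k - (- n) - 1 + int e')")
      case False
      then have "x = 0" using Mg_unique[OF xd xD] by blast
      then show ?thesis using M.subspace_0[OF Lsp_sub] by simp
    next
      case True
      define kk where "kk = nat k"
      have k: "k = int kk" using step unfolding kk_def by simp
      have a: "a \<in> Vdeg sV Y \<omega> (int kk)" using step(2) k by simp
      obtain kk' where kk': "kk = Suc kk'" using step(3) k by (cases kk) auto
      have dd: "int d = int kk + n - 1 + int e'" using True k kn by simp
      have e'd: "e' < d" using dd step(3,4) k by linarith
      have yL: "y \<in> Lsp e'" using less[OF e'd] e' by blast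
      have resin: "res a n (RR ^ kk) y \<in> Lsp d"
      proof (cases "n = 1")
        case True
        have "star_left sM YM a kk y \<in> Lsp (e' + kk)" by (rule M2[OF yL a])
        moreover have "e' + kk \<le> d" using dd True by linarith
        ultimately show ?thesis using Lsp_mono star_left_res True by auto
      next
        case False
        then have "res a n (RR ^ kk) y \<in> OMM" using step(4) by (intro lemA[OF a]) simp
        then show ?thesis using OMM_Lsp by blast
      qed
      have exp: "res a n (RR ^ kk) y = YM a (- n) y
          + (\<Sum>j\<le>kk'. sM (of_nat (kk choose Suc j)) (YM a (int (Suc j) - n) y))"
        unfolding res_RR kk' by (subst sum.atMost_Suc_shift) simp
      have rest: "(\<Sum>j\<le>kk'. sM (of_nat (kk choose Suc j)) (YM a (int (Suc j) - n) y)) \<in> Lsp d"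
      proof (intro M.subspace_sum[OF Lsp_sub] M.subspace_scale[OF Lsp_sub])
        fix j assume "j \<in> {..kk'}"
        show "YM a (int (Suc j) - n) y \<in> Lsp d"
        proof (rule mode_low[OF a e' _ low Lsp_sub])
          have "int j \<ge> 0" by simp
          then show "int kk - (int (Suc j) - n) - 1 + int e' < int d" using dd by simp
        qed
      qed
      have "x = res a n (RR ^ kk) y - (\<Sum>j\<le>kk'. sM (of_nat (kk choose Suc j)) (YM a (int (Suc j) - n) y))"
        using exp step(1) by simp
      also have "\<dots> \<in> Lsp d" using resin rest by (rule M.subspace_diff[OF Lsp_sub])
      finally show ?thesis .
    qed
  qed
  show ?case
  proof
    fix v assume vd: "v \<in> Mg d"
    have "v \<in> M.span (strong_words sV Y \<omega> YM (w ` {..<r}))" using SG by (simp add: strongly_generated_def)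
    then have "v \<in> M.span (strong_words sV Y \<omega> YM (w ` {..<r}) \<inter> Mg d)"
      using span_graded word_graded[OF _ W_graded] vd by blast
    also have "\<dots> \<subseteq> Lsp d" using words by (intro M.span_minimal Lsp_sub) blast
    finally show "v \<in> Lsp d" .
  qed
qed

end


context zhu_gen
begin

lemma low_AF: "e' < Suc n \<Longrightarrow> Mg e' \<subseteq> AF n"
  unfolding AF_eq by (intro subset_trans[OF _ M.span_superset]) (auto simp: less_Suc_eq_le)

lemma Lgen_AF: "x \<in> Lgen n \<Longrightarrow> x \<in> AF n"
proof -
  assume "x \<in> Lgen n"
  then obtain i a k where i: "i < r" and x: "x = star_left sM YM a k (w i)"
    and a: "a \<in> Vdeg sV Y \<omega> (int k)" and k: "int k \<le> int n - int (nn i)" by blast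
  have wi: "w i \<in> Mg (nn i)" using WG i by blast
  have "(\<Sum>j\<le>k. sM (of_nat (k choose j)) (YM a (int j - 1) (w i))) \<in> AF n"
  proof (intro M.subspace_sum[OF AF_sub] M.subspace_scale[OF AF_sub])
    fix j assume "j \<in> {..k}"
    show "YM a (int j - 1) (w i) \<in> AF n"
    proof (rule mode_low[OF a wi _ low_AF AF_sub])
      have "int j \<ge> 0" by simp
      then show "int k - (int j - 1) - 1 + int (nn i) < int (Suc n)" using k by simp
    qed
  qed
  then show ?thesis using x by (simp add: star_left_res res_RR)
qed

lemma Rgen_AF: "x \<in> Rgen n \<Longrightarrow> x \<in> AF n"
proof -
  assume "x \<in> Rgen n"
  then obtain i a k where i: "i < r" and x: "x = star_right sM YM (w i) a k"
    and a: "a \<in> Vdeg sV Y \<omega> (int k)" and k: "int k \<le> int n - int (nn i)" by blast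
  have wi: "w i \<in> Mg (nn i)" using WG i by blast
  have "(\<Sum>j\<le>k. sM (ibinom (int k - 1) j) (YM a (int j - 1) (w i))) \<in> AF n"
  proof (intro M.subspace_sum[OF AF_sub] M.subspace_scale[OF AF_sub])
    fix j assume "j \<in> {..k}"
    show "YM a (int j - 1) (w i) \<in> AF n"
    proof (rule mode_low[OF a wi _ low_AF AF_sub])
      have "int j \<ge> 0" by simp
      then show "int k - (int j - 1) - 1 + int (nn i) < int (Suc n)" using k by simp
    qed
  qed
  then show ?thesis using x by (simp add: star_right_def)
qed

lemma left_eq: "AF n = Lsp n"
proof
  show "AF n \<subseteq> Lsp n"
    unfolding AF_eq
  proof (intro M.span_minimal Lsp_sub Un_least UN_least)
    fix i assume "i \<in> {..n}"
    then show "Mg i \<subseteq> Lsp n" using main_left[of i] Lsp_mono[of i n] by auto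
  qed (rule OMM_Lsp)
  show "Lsp n \<subseteq> AF n"
    unfolding Lsp_eq[of n]
  proof (intro M.span_minimal AF_sub Un_least)
    show "Lgen n \<subseteq> AF n" using Lgen_AF by blast
  qed (rule OMM_AF)
qed

lemma star_diff: "star_left sM YM a k v - star_right sM YM v a k
   = (\<Sum>j\<le>k. sM (ibinom (int k) j - ibinom (int k - 1) j) (YM a (int j - 1) v))"
  by (simp add: star_left_def star_right_def sum_subtractf[symmetric] M.scale_left_diff_distrib)

lemma main_right: "Mg d \<subseteq> Rsp d"
proof (induction d rule: less_induct)
  case (less d)
  have low: "Mg e \<subseteq> Rsp d" if "e < d" for e using less[OF that] Rsp_mono[of e d] that by auto
  have "Lsp d \<subseteq> Rsp d"
    unfolding Lsp_eq[of d]
  proof (intro M.span_minimal Rsp_sub Un_least)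
    show "Lgen d \<subseteq> Rsp d"
    proof
      fix x assume "x \<in> Lgen d"
      then obtain i a k where i: "i < r" and x: "x = star_left sM YM a k (w i)"
        and a: "a \<in> Vdeg sV Y \<omega> (int k)" and k: "int k \<le> int d - int (nn i)" by blast
      have wi: "w i \<in> Mg (nn i)" using WG i by blast
      have R: "star_right sM YM (w i) a k \<in> Rsp d" using i a k by (intro Rgen_Rsp) blast
      have D: "(\<Sum>j\<le>k. sM (ibinom (int k) j - ibinom (int k - 1) j) (YM a (int j - 1) (w i))) \<in> Rsp d"
      proof (intro M.subspace_sum[OF Rsp_sub])
        fix j assume "j \<in> {..k}"
        show "sM (ibinom (int k) j - ibinom (int k - 1) j) (YM a (int j - 1) (w i)) \<in> Rsp d"
        proof (cases "j = 0")
          case True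
          then show ?thesis using M.subspace_0[OF Rsp_sub] by (simp add: ibinom_0)
        next
          case False
          have "YM a (int j - 1) (w i) \<in> Rsp d"
          proof (rule mode_low[OF a wi _ low Rsp_sub])
            show "int k - (int j - 1) - 1 + int (nn i) < int d" using k False by simp
          qed
          then show ?thesis by (rule M.subspace_scale[OF Rsp_sub])
        qed
      qed
      have "x = star_right sM YM (w i) a k + (star_left sM YM a k (w i) - star_right sM YM (w i) a k)"
        using x by simp
      also have "\<dots> \<in> Rsp d" unfolding star_diff using R D by (rule M.subspace_add[OF Rsp_sub])
      finally show "x \<in> Rsp d" .
    qed
  qed (rule OMM_Rsp)
  then show ?case using main_left[of d] by blast
qed

lemma right_eq: "AF n = Rsp n"
proof
  show "AF n \<subseteq> Rsp n"
    unfolding AF_eq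
  proof (intro M.span_minimal Rsp_sub Un_least UN_least)
    fix i assume "i \<in> {..n}"
    then show "Mg i \<subseteq> Rsp n" using main_right[of i] Rsp_mono[of i n] by auto
  qed (rule OMM_Rsp)
  show "Rsp n \<subseteq> AF n"
    unfolding Rsp_eq[of n]
  proof (intro M.span_minimal AF_sub Un_least)
    show "Rgen n \<subseteq> AF n" using Rgen_AF by blast
  qed (rule OMM_AF)
qed

end

theorem proposition4p11:
  fixes sV :: "complex \<Rightarrow> 'v::ab_group_add \<Rightarrow> 'v" and Y :: "('v,'v) vop"
    and vac \<omega> :: 'v and c :: complex
    and sM :: "complex \<Rightarrow> 'm::ab_group_add \<Rightarrow> 'm" and YM :: "('v,'m) vop"
    and Mg :: "nat \<Rightarrow> 'm set"
    and r :: nat and w :: "nat \<Rightarrow> 'm" and nn :: "nat \<Rightarrow> nat"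
  assumes "is_VOA_CFT_type sV Y vac \<omega> c"
    and "admissible sV Y vac \<omega> sM YM Mg"
    and "strongly_generated sV Y \<omega> sM YM (w ` {..<r})"
    and "\<forall>i<r. w i \<in> Mg (nn i)"
  shows "\<forall>n. AM_filt sV Y \<omega> sM YM Mg n = left_gen_span sV Y \<omega> sM YM r w nn n
           \<and> AM_filt sV Y \<omega> sM YM Mg n = right_gen_span sV Y \<omega> sM YM r w nn n"
proof -
  interpret zhu_gen sV Y vac \<omega> c sM YM Mg r w nn
    by (unfold_locales) (use assms in auto)
  show ?thesis using left_eq right_eq by blast
qed



end
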